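(* For every positive integer $n$, the Alon-Tarsi number of the complete bipartite graph $K_{n,n}$ equals $1+\left\lceil \frac{n}{2}\right\rceil$.
   Context: For a graph $G$ with vertices ordered $x_1,\dots,x_N$ (treated as variables over a field of characteristic $0$), the graph polynomial is $P_G=\prod_{i<j,\ x_ix_j\in E(G)}(x_i-x_j)$. The Alon-Tarsi number of $G$ is $1+\min\max_k i_k$, where the minimum is over all monomials $x_1^{i_1}\cdots x_N^{i_N}$ with nonzero coefficient in $P_G$. *)

theory Defs
  imports Complex_Main "HOL-Library.Poly_Mapping"
begin

text \<open>Multivariate polynomials in variables x_0, x_1, ... over the rationals (a field of
  characteristic 0): monomials are finitely supported exponent vectors (nat =>0 nat),
  polynomials are finitely supported coefficient maps on monomials.\<close>

type_synonym mpoly = "(nat \<Rightarrow>\<^sub>0 nat) \<Rightarrow>\<^sub>0 rat"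

definition Var :: "nat \<Rightarrow> mpoly" where
  "Var i = Poly_Mapping.single (Poly_Mapping.single i 1) 1"

text \<open>A graph on vertex set {0..<N} (vertex i plays the role of x_{i+1}), given by a
  symmetric irreflexive adjacency relation E.\<close>

definition graph_poly :: "nat \<Rightarrow> (nat \<Rightarrow> nat \<Rightarrow> bool) \<Rightarrow> mpoly" where
  "graph_poly N E = (\<Prod>(i, j) \<in> {(i, j). i < j \<and> j < N \<and> E i j}. Var i - Var j)"

definition alon_tarsi_number :: "nat \<Rightarrow> (nat \<Rightarrow> nat \<Rightarrow> bool) \<Rightarrow> nat" where
  "alon_tarsi_number N E =
     1 + Min ((\<lambda>m. Max ((\<lambda>k. Poly_Mapping.lookup m k) ` {..<N}))
          ` {m :: nat \<Rightarrow>\<^sub>0 nat. Poly_Mapping.lookup (graph_poly N E) m \<noteq> 0})"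

definition Knn :: "nat \<Rightarrow> nat \<Rightarrow> nat \<Rightarrow> bool" where
  "Knn n i j \<longleftrightarrow> i < 2 * n \<and> j < 2 * n \<and> (i < n \<longleftrightarrow> \<not> j < n)"

end

theory Submission
  imports Defs
begin

lemma prod_single:
  fixes f :: "'x \<Rightarrow> (nat \<Rightarrow>\<^sub>0 nat)" and c :: "'x \<Rightarrow> rat"
  assumes "finite A"
  shows "(\<Prod>a\<in>A. Poly_Mapping.single (f a) (c a)) = Poly_Mapping.single (\<Sum>a\<in>A. f a) (\<Prod>a\<in>A. c a)"
  using assms by (induction A rule: finite_induct) (auto simp: mult_single)

definition monoB :: "('x \<Rightarrow> nat) \<Rightarrow> ('x \<Rightarrow> nat) \<Rightarrow> 'x set \<Rightarrow> 'x set \<Rightarrow> (nat \<Rightarrow>\<^sub>0 nat)" where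
  "monoB a b S B = (\<Sum>e\<in>S. Poly_Mapping.single (if e \<in> B then a e else b e) 1)"

lemma expand:
  assumes "finite S"
  shows "(\<Prod>e\<in>S. Var (a e) - Var (b e)) =
    (\<Sum>B\<in>Pow S. Poly_Mapping.single (monoB a b S B) ((-1) ^ card (S - B)))"
proof -
  have "(\<Prod>e\<in>S. Var (a e) - Var (b e)) = (\<Prod>e\<in>S. Var (a e) + (- Var (b e)))" by simp
  also have "\<dots> = (\<Sum>B\<in>Pow S. (\<Prod>e\<in>B. Var (a e)) * (\<Prod>e\<in>S-B. - Var (b e)))"
    by (rule prod_add[OF assms])
  also have "\<dots> = (\<Sum>B\<in>Pow S. Poly_Mapping.single (monoB a b S B) ((-1) ^ card (S - B)))"
  proof (rule sum.cong[OF refl])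
    fix B assume B: "B \<in> Pow S"
    have fB: "finite B" "finite (S - B)" using B assms finite_subset by auto
    have 1: "(\<Prod>e\<in>B. Var (a e)) = Poly_Mapping.single (\<Sum>e\<in>B. Poly_Mapping.single (a e) 1) 1"
      unfolding Var_def using prod_single[OF fB(1), of "\<lambda>e. Poly_Mapping.single (a e) 1" "\<lambda>_. 1"] by simp
    have 2: "(\<Prod>e\<in>S-B. - Var (b e)) = Poly_Mapping.single (\<Sum>e\<in>S-B. Poly_Mapping.single (b e) 1) ((-1) ^ card (S - B))"
      unfolding Var_def single_uminus[symmetric]
      using prod_single[OF fB(2), of "\<lambda>e. Poly_Mapping.single (b e) 1" "\<lambda>_. -1"] by simp
    have 3: "monoB a b S B = (\<Sum>e\<in>B. Poly_Mapping.single (a e) 1) + (\<Sum>e\<in>S-B. Poly_Mapping.single (b e) 1)"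
    proof -
      have "monoB a b S B = (\<Sum>e\<in>S. if e \<in> B then Poly_Mapping.single (a e) 1 else Poly_Mapping.single (b e) 1)"
        unfolding monoB_def by (rule sum.cong) auto
      also have "\<dots> = (\<Sum>e\<in>S \<inter> B. Poly_Mapping.single (a e) 1) + (\<Sum>e\<in>S \<inter> - B. Poly_Mapping.single (b e) 1)"
        by (simp only: sum.If_cases[OF assms] Collect_mem_eq)
      finally show ?thesis using B by (simp add: Int_absorb1 Diff_eq)
    qed
    show "(\<Prod>e\<in>B. Var (a e)) * (\<Prod>e\<in>S-B. - Var (b e)) = Poly_Mapping.single (monoB a b S B) ((-1) ^ card (S - B))"
      unfolding 1 2 3 mult_single by simp
  qed
  finally show ?thesis .
qed

lemma lookup_monoB:
  assumes "finite S"
  shows "Poly_Mapping.lookup (monoB a b S B) t = (\<Sum>e\<in>S. (1 when (if e \<in> B then a e else b e) = t))"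
  unfolding monoB_def lookup_sum lookup_single by simp

lemma total_mono:
  assumes "finite S" "\<forall>e\<in>S. a e < N \<and> b e < N"
  shows "(\<Sum>t<N. Poly_Mapping.lookup (monoB a b S B) t) = card S"
proof -
  have "(\<Sum>t<N. Poly_Mapping.lookup (monoB a b S B) t) = (\<Sum>e\<in>S. \<Sum>t<N. (1 when (if e \<in> B then a e else b e) = t))"
    unfolding lookup_monoB[OF assms(1)] by (rule sum.swap)
  also have "\<dots> = (\<Sum>e\<in>S. 1)"
    apply (rule sum.cong[OF refl])
    using assms(2) by (simp add: when_def)
  finally show ?thesis by simp
qed

lemma left_mono:
  assumes "finite S" "\<forall>e\<in>S. a e < n \<and> n \<le> b e" "B \<subseteq> S"
  shows "(\<Sum>t<n. Poly_Mapping.lookup (monoB a b S B) t) = card B"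
proof -
  have "(\<Sum>t<n. Poly_Mapping.lookup (monoB a b S B) t) = (\<Sum>e\<in>S. \<Sum>t<n. (1 when (if e \<in> B then a e else b e) = t))"
    unfolding lookup_monoB[OF assms(1)] by (rule sum.swap)
  also have "\<dots> = (\<Sum>e\<in>S. (1 when e \<in> B))"
    apply (rule sum.cong[OF refl])
    using assms(2) by (auto simp: when_def)
  also have "\<dots> = card B" using assms by (simp add: when_def sum.If_cases Int_absorb1)
  finally show ?thesis .
qed


lemma L1: fixes a j1 j2 n :: nat
  assumes "a < n" "n \<le> j1" "j1 < 2*n" "n \<le> j2" "j2 < 2*n" "(j1 - a) mod n = (j2 - a) mod n"
  shows "j1 = j2"
proof -
  have "int (j1 - a) mod int n = int (j2 - a) mod int n" using assms(6) by (metis of_nat_mod)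
  then have "(int j1 - int a) mod int n = (int j2 - int a) mod int n" using assms by (simp add: of_nat_diff)
  then have "int n dvd ((int j1 - int a) - (int j2 - int a))" by (simp only: mod_eq_dvd_iff)
  then have d: "int n dvd (int j1 - int j2)" by simp
  have "\<bar>int j1 - int j2\<bar> < int n" using assms by linarith
  then have "int j1 - int j2 = 0" using dvd_imp_le_int[OF _ d] by force
  then show ?thesis by simp
qed
lemma L2: fixes a1 a2 j n :: nat
  assumes "a1 < n" "a2 < n" "n \<le> j" "(j - a1) mod n = (j - a2) mod n"
  shows "a1 = a2"
proof -
  have "int (j - a1) mod int n = int (j - a2) mod int n" using assms(4) by (metis of_nat_mod)
  then have "(int j - int a1) mod int n = (int j - int a2) mod int n" using assms by (simp add: of_nat_diff)
  then have "int n dvd ((int j - int a1) - (int j - int a2))" by (simp only: mod_eq_dvd_iff)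
  then have d: "int n dvd (int a2 - int a1)" by simp
  have "\<bar>int a2 - int a1\<bar> < int n" using assms by linarith
  then have "int a2 - int a1 = 0" using dvd_imp_le_int[OF _ d] by force
  then show ?thesis by simp
qed

lemma lookup_monoB_card:
  assumes "finite S"
  shows "Poly_Mapping.lookup (monoB a b S B) t = card {e\<in>S. (if e \<in> B then a e else b e) = t}"
  unfolding lookup_monoB[OF assms] using assms by (simp add: when_def sum.inter_filter[symmetric])

lemma Knn_poly:
  "graph_poly (2 * n) (Knn n) = (\<Prod>e\<in>{..<n} \<times> {n..<2*n}. Var (fst e) - Var (snd e))"
proof -
  have "{(i, j). i < j \<and> j < 2 * n \<and> Knn n i j} = {..<n} \<times> {n..<2*n}"
    unfolding Knn_def by auto
  then show ?thesis unfolding graph_poly_def by (simp add: case_prod_beta')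
qed

lemma coef:
  fixes n :: nat
  defines "S \<equiv> {..<n} \<times> {n..<2*n}"
  shows "Poly_Mapping.lookup (graph_poly (2 * n) (Knn n)) m =
     (-1) ^ (card S - (\<Sum>t<n. Poly_Mapping.lookup m t)) * of_nat (card {B\<in>Pow S. monoB fst snd S B = m})"
proof -
  have fS: "finite S" unfolding S_def by auto
  have "Poly_Mapping.lookup (graph_poly (2 * n) (Knn n)) m =
      (\<Sum>B\<in>Pow S. ((-1) ^ card (S - B) when monoB fst snd S B = m))"
    unfolding Knn_poly S_def[symmetric] expand[OF fS] lookup_sum lookup_single by simp
  also have "\<dots> = (\<Sum>B\<in>{B\<in>Pow S. monoB fst snd S B = m}. (-1) ^ card (S - B))"
    unfolding when_def by (rule sum.inter_filter[symmetric]) (use fS in simp)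
  also have "\<dots> = (\<Sum>B\<in>{B\<in>Pow S. monoB fst snd S B = m}. (-1) ^ (card S - (\<Sum>t<n. Poly_Mapping.lookup m t)))"
  proof (rule sum.cong[OF refl])
    fix B assume B: "B \<in> {B\<in>Pow S. monoB fst snd S B = m}"
    have "(\<Sum>t<n. Poly_Mapping.lookup m t) = card B"
      using B left_mono[OF fS, of fst n snd B] unfolding S_def by auto
    moreover have "card (S - B) = card S - card B" using B fS by (metis (no_types, lifting) CollectD PowD card_Diff_subset finite_subset)
    ultimately show "((-1::rat) ^ card (S - B)) = (-1) ^ (card S - (\<Sum>t<n. Poly_Mapping.lookup m t))" by simp
  qed
  also have "\<dots> = (-1) ^ (card S - (\<Sum>t<n. Poly_Mapping.lookup m t)) * of_nat (card {B\<in>Pow S. monoB fst snd S B = m})"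
    by simp
  finally show ?thesis .
qed

lemma coef_nz:
  fixes n :: nat
  defines "S \<equiv> {..<n} \<times> {n..<2*n}"
  shows "Poly_Mapping.lookup (graph_poly (2 * n) (Knn n)) m \<noteq> 0 \<longleftrightarrow> (\<exists>B\<in>Pow S. monoB fst snd S B = m)"
proof -
  have "finite {B\<in>Pow S. monoB fst snd S B = m}" unfolding S_def by auto
  then show ?thesis unfolding coef S_def[symmetric] by auto
qed

theorem mainTheorem3:
  fixes n :: nat
  assumes "n \<ge> 1"
  shows "alon_tarsi_number (2 * n) (Knn n) = 1 + nat \<lceil>real n / 2\<rceil>"
proof -
  define k where "k = (n + 1) div 2"
  have kc: "nat \<lceil>real n / 2\<rceil> = k"
  proof -
    have "\<lceil>real n / 2\<rceil> = int k" unfolding k_def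
      by (rule ceiling_unique) linarith+
    then show ?thesis by simp
  qed
  define S where "S = {..<n} \<times> {n..<2*n}"
  have fS: "finite S" unfolding S_def by auto
  define F where "F = (\<lambda>m :: nat \<Rightarrow>\<^sub>0 nat. Max ((\<lambda>t. Poly_Mapping.lookup m t) ` {..<2*n}))"
  define M where "M = {m :: nat \<Rightarrow>\<^sub>0 nat. Poly_Mapping.lookup (graph_poly (2 * n) (Knn n)) m \<noteq> 0}"
  have lower: "k \<le> F m" if "m \<in> M" for m
  proof (rule ccontr)
    assume "\<not> k \<le> F m"
    then have Fk: "F m + 1 \<le> k" by simp
    from that obtain B where B: "B \<in> Pow S" "monoB fst snd S B = m"
      unfolding M_def coef_nz S_def by auto
    have tot: "(\<Sum>t<2*n. Poly_Mapping.lookup m t) = n * n"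
      using total_mono[OF fS, of fst "2*n" snd B] B unfolding S_def by auto
    have "(\<Sum>t<2*n. Poly_Mapping.lookup m t) \<le> (\<Sum>t<2*n. F m)"
      by (rule sum_mono) (auto simp: F_def)
    also have "\<dots> = n * (2 * F m)" by simp
    also have "\<dots> < n * n"
    proof (rule mult_strict_left_mono)
      show "2 * F m < n" using Fk unfolding k_def by linarith
    qed (use assms in auto)
    finally show False using tot by simp
  qed
  define B0 where "B0 = {e\<in>S. (snd e - fst e) mod n < k}"
  define m0 where "m0 = monoB fst snd S B0"
  have m0M: "m0 \<in> M" unfolding M_def m0_def coef_nz S_def[symmetric] B0_def by auto
  have m0le: "Poly_Mapping.lookup m0 t \<le> k" if t: "t < 2 * n" for t
  proof (cases "t < n")
    case True
    have sub: "{e\<in>S. (if e \<in> B0 then fst e else snd e) = t} \<subseteq> {e\<in>S. e \<in> B0 \<and> fst e = t}"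
      using True unfolding S_def by auto
    have inj: "inj_on (\<lambda>e. (snd e - fst e) mod n) {e\<in>S. e \<in> B0 \<and> fst e = t}"
    proof (rule inj_onI)
      fix x y assume x: "x \<in> {e\<in>S. e \<in> B0 \<and> fst e = t}" and y: "y \<in> {e\<in>S. e \<in> B0 \<and> fst e = t}"
        and eq: "(snd x - fst x) mod n = (snd y - fst y) mod n"
      have "snd x = snd y" using L1[of t n "snd x" "snd y"] x y eq True unfolding S_def by auto
      then show "x = y" using x y by (simp add: prod_eq_iff)
    qed
    moreover have img: "(\<lambda>e. (snd e - fst e) mod n) ` {e\<in>S. e \<in> B0 \<and> fst e = t} \<subseteq> {..<k}"
      unfolding B0_def by auto
    ultimately have "card {e\<in>S. e \<in> B0 \<and> fst e = t} \<le> card {..<k}"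
      using card_inj_on_le[OF inj img] by simp
    then have "card {e\<in>S. (if e \<in> B0 then fst e else snd e) = t} \<le> k"
      using card_mono[OF _ sub] fS by fastforce
    then show ?thesis unfolding m0_def lookup_monoB_card[OF fS] .
  next
    case False
    have sub: "{e\<in>S. (if e \<in> B0 then fst e else snd e) = t} \<subseteq> {e\<in>S. e \<notin> B0 \<and> snd e = t}"
      using False unfolding S_def by auto
    have inj: "inj_on (\<lambda>e. (snd e - fst e) mod n) {e\<in>S. e \<notin> B0 \<and> snd e = t}"
    proof (rule inj_onI)
      fix x y assume x: "x \<in> {e\<in>S. e \<notin> B0 \<and> snd e = t}" and y: "y \<in> {e\<in>S. e \<notin> B0 \<and> snd e = t}"
        and eq: "(snd x - fst x) mod n = (snd y - fst y) mod n"
      have "fst x = fst y" using L2[of "fst x" n "fst y" t] x y eq False unfolding S_def by auto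
      then show "x = y" using x y by (simp add: prod_eq_iff)
    qed
    moreover have img: "(\<lambda>e. (snd e - fst e) mod n) ` {e\<in>S. e \<notin> B0 \<and> snd e = t} \<subseteq> {k..<n}"
      unfolding B0_def using assms by auto
    ultimately have "card {e\<in>S. e \<notin> B0 \<and> snd e = t} \<le> card {k..<n}"
      using card_inj_on_le[OF inj img] by simp
    also have "card {k..<n} \<le> k" unfolding k_def by simp
    finally have "card {e\<in>S. (if e \<in> B0 then fst e else snd e) = t} \<le> k"
      using card_mono[OF _ sub] fS by fastforce
    then show ?thesis unfolding m0_def lookup_monoB_card[OF fS] .
  qed
  have Fm0: "F m0 = k"
  proof (rule antisym)
    show "F m0 \<le> k" unfolding F_def using m0le assms by (intro Max.boundedI) (auto simp: lessThan_empty_iff)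
    show "k \<le> F m0" using lower[OF m0M] .
  qed
  have fM: "finite M"
  proof -
    have "M = Poly_Mapping.keys (graph_poly (2 * n) (Knn n))" unfolding M_def by (auto simp: in_keys_iff)
    then show ?thesis by simp
  qed
  have "Min (F ` M) = k"
  proof (rule Min_eqI)
    show "finite (F ` M)" using fM by simp
    show "\<And>y. y \<in> F ` M \<Longrightarrow> k \<le> y" using lower by auto
    show "k \<in> F ` M" using m0M Fm0 by force
  qed
  then show ?thesis unfolding alon_tarsi_number_def kc
    by (simp add: F_def M_def)
qed

end
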